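(* Let $\mathbb{R}^n_s$ be $\mathbb{R}^n$ with a non-degenerate symmetric bilinear form of signature $(n-s,s)$, and let $G\subset\mathrm{Iso}(\mathbb{R}^n_s)$ be a real Zariski-closed subgroup whose centralizer in $\mathrm{Iso}(\mathbb{R}^n_s)$ acts transitively on $\mathbb{R}^n$. Fix $p\in\mathbb{R}^n$; the orbit $F_p=G.p$ is an affine subspace of $\mathbb{R}^n$ and the orbit map $\theta:G\to F_p$, $g\mapsto g.p$, is a diffeomorphism; let $\nabla$ be the flat affine connection on $G$ obtained by pulling back the natural affine connection of $F_p$ via $\theta$. Then $\nabla$ coincides with the (0)-connection $\tilde\nabla$ on $G$.
   Context: The (0)-connection on the Lie group $G$ is the left-invariant affine connection $\tilde\nabla$ determined by $\tilde\nabla_XY=\frac12[X,Y]$ for left-invariant vector fields $X,Y$; for this $G$ (which is 2-step nilpotent with $XY=\frac12[X,Y]$ in matrices for $X,Y$ in its Lie algebra) one has $(\tilde\nabla_XY)_g=gX_IY_I$, where $X_I,Y_I$ are the values at the identity. Elements of $\mathrm{Iso}(\mathbb{R}^n_s)$ are affine maps $(I+A,v)$ identified with matrices $\begin{pmatrix}I+A&v\\0&1\end{pmatrix}\in\mathrm{GL}_{n+1}(\mathbb{R})$. *)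

theory Defs
  imports "HOL-Analysis.Analysis"
begin

text \<open>
  An element of Iso(R^n_s), i.e. the block matrix
  [[M, v],[0, 1]] in GL_{n+1}(R), is represented by the pair (M, v).
  A tangent vector to Iso(R^n_s) (an element of the affine slice direction,
  i.e. a block matrix [[X, w],[0, 0]]) is represented by the pair (X, w).
\<close>

type_synonym 'n amat = "(real^'n^'n) \<times> (real^'n)"

definition nondeg_sym_form :: "real^('n::finite)^'n \<Rightarrow> bool" where
  "nondeg_sym_form B \<longleftrightarrow> transpose B = B \<and> invertible B"

definition Iso :: "real^('n::finite)^'n \<Rightarrow> ('n::finite) amat set" where
  "Iso B = {(M, v). transpose M ** B ** M = B}"

definition gmul :: "('n::finite) amat \<Rightarrow> ('n::finite) amat \<Rightarrow> ('n::finite) amat" where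
  "gmul g h = (fst g ** fst h, fst g *v snd h + snd g)"

definition gone :: "('n::finite) amat" where
  "gone = (mat 1, 0)"

definition ginv :: "('n::finite) amat \<Rightarrow> ('n::finite) amat" where
  "ginv g = (matrix_inv (fst g), - (matrix_inv (fst g) *v snd g))"

definition act :: "('n::finite) amat \<Rightarrow> real^('n::finite) \<Rightarrow> real^'n" where
  "act g x = fst g *v x + snd g"

text \<open>Matrix product [[M,v],[0,1]] * [[X,w],[0,0]] (left translation of tangent vectors).\<close>
definition lmul :: "('n::finite) amat \<Rightarrow> ('n::finite) amat \<Rightarrow> ('n::finite) amat" where
  "lmul g Z = (fst g ** fst Z, fst g *v snd Z)"

text \<open>Matrix product of two tangent-type block matrices [[X1,w1],[0,0]] [[X2,w2],[0,0]].\<close>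
definition tprod :: "('n::finite) amat \<Rightarrow> ('n::finite) amat \<Rightarrow> ('n::finite) amat" where
  "tprod Z1 Z2 = (fst Z1 ** fst Z2, fst Z1 *v snd Z2)"

definition bracket :: "('n::finite) amat \<Rightarrow> ('n::finite) amat \<Rightarrow> ('n::finite) amat" where
  "bracket Z1 Z2 = tprod Z1 Z2 - tprod Z2 Z1"

inductive poly_fun :: "('a::euclidean_space \<Rightarrow> real) \<Rightarrow> bool" where
  pf_const: "poly_fun (\<lambda>x. c)"
| pf_coord: "b \<in> Basis \<Longrightarrow> poly_fun (\<lambda>x. x \<bullet> b)"
| pf_add: "poly_fun f \<Longrightarrow> poly_fun g \<Longrightarrow> poly_fun (\<lambda>x. f x + g x)"
| pf_mult: "poly_fun f \<Longrightarrow> poly_fun g \<Longrightarrow> poly_fun (\<lambda>x. f x * g x)"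

definition zariski_closed_in_Iso :: "real^('n::finite)^'n \<Rightarrow> ('n::finite) amat set \<Rightarrow> bool" where
  "zariski_closed_in_Iso B G \<longleftrightarrow>
     (\<exists>S. (\<forall>f\<in>S. poly_fun f) \<and> G = {g \<in> Iso B. \<forall>f\<in>S. f g = 0})"

definition subgroup_Iso :: "real^('n::finite)^'n \<Rightarrow> ('n::finite) amat set \<Rightarrow> bool" where
  "subgroup_Iso B G \<longleftrightarrow> G \<subseteq> Iso B \<and> gone \<in> G \<and>
     (\<forall>g\<in>G. \<forall>h\<in>G. gmul g h \<in> G) \<and> (\<forall>g\<in>G. ginv g \<in> G)"

definition centralizer_transitive :: "real^('n::finite)^'n \<Rightarrow> ('n::finite) amat set \<Rightarrow> bool" where
  "centralizer_transitive B G \<longleftrightarrow>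
     (\<forall>x y. \<exists>h\<in>Iso B. (\<forall>g\<in>G. gmul h g = gmul g h) \<and> act h x = y)"

definition TG :: "('n::finite) amat set \<Rightarrow> ('n::finite) amat \<Rightarrow> ('n::finite) amat set" where
  "TG G g = {Z. \<exists>\<gamma>::real \<Rightarrow> ('n::finite) amat. (\<forall>t. \<gamma> t \<in> G) \<and> \<gamma> 0 = g \<and>
                 (\<gamma> has_vector_derivative Z) (at 0)}"

definition vector_field :: "('n::finite) amat set \<Rightarrow> (('n::finite) amat \<Rightarrow> ('n::finite) amat) \<Rightarrow> bool" where
  "vector_field G Y \<longleftrightarrow> (\<forall>g\<in>G. Y differentiable (at g) \<and> Y g \<in> TG G g)"

text \<open>Orbit F_p = G.p, orbit map \<theta>, its differential (\<theta> is the restriction of an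
  affine map of the ambient space, whose linear part is thlin) and its inverse.\<close>
definition orbit :: "('n::finite) amat set \<Rightarrow> real^('n::finite) \<Rightarrow> (real^'n) set" where
  "orbit G p = (\<lambda>g. act g p) ` G"

definition thlin :: "real^('n::finite) \<Rightarrow> ('n::finite) amat \<Rightarrow> real^'n" where
  "thlin p Z = fst Z *v p + snd Z"

definition thinv :: "('n::finite) amat set \<Rightarrow> real^('n::finite) \<Rightarrow> real^('n::finite) \<Rightarrow> ('n::finite) amat" where
  "thinv G p q = (THE g. g \<in> G \<and> act g p = q)"

text \<open>Pull-back via \<theta> of the natural flat affine connection D of the affine space F_p:
  (\<nabla>_X Y)(g) = d\<theta>_g^{-1} ( D_{d\<theta>(X g)} (\<theta>_* Y) (\<theta> g) ), with
  D_v W (q) = d/dt W(q + t v) at t = 0.\<close>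
definition nabla_pull :: "('n::finite) amat set \<Rightarrow> real^('n::finite) \<Rightarrow> (('n::finite) amat \<Rightarrow> ('n::finite) amat) \<Rightarrow>
    (('n::finite) amat \<Rightarrow> ('n::finite) amat) \<Rightarrow> ('n::finite) amat \<Rightarrow> ('n::finite) amat" where
  "nabla_pull G p X Y g =
     (THE Z. Z \<in> TG G g \<and>
        thlin p Z = vector_derivative
          (\<lambda>t. thlin p (Y (thinv G p (act g p + t *\<^sub>R thlin p (X g))))) (at 0))"

text \<open>The (0)-connection: the left-invariant affine connection with
  \<nabla>_X Y = 1/2 [X,Y] on left-invariant fields.  Writing an arbitrary field as
  Y(h) = h y(h) with y(h) = h^{-1} Y(h) in the Lie algebra, the affine-connection
  axioms give (\<nabla>_X Y)(g) = g (X_g(y) + 1/2 [x(g), y(g)]).\<close>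
definition nabla0 :: "(('n::finite) amat \<Rightarrow> ('n::finite) amat) \<Rightarrow> (('n::finite) amat \<Rightarrow> ('n::finite) amat) \<Rightarrow> ('n::finite) amat \<Rightarrow> ('n::finite) amat" where
  "nabla0 X Y g =
     lmul g (frechet_derivative (\<lambda>h. lmul (ginv h) (Y h)) (at g) (X g)
             + (1/2) *\<^sub>R bracket (lmul (ginv g) (X g)) (lmul (ginv g) (Y g)))"

end

theory Submission
  imports Defs
begin


lemma matrix_add_rdistrib: "((A::real^'n^'m) + B) ** C = A ** C + B ** C"
  by (vector matrix_matrix_mult_def sum.distrib field_simps)

lemma matrix_diff_rdistrib: "((A::real^'n^'m) - B) ** C = A ** C - B ** C"
  by (vector matrix_matrix_mult_def sum_subtractf field_simps)

lemma matrix_diff_ldistrib: "(A::real^'n^'m) ** (B - C) = A ** B - A ** C"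
  by (vector matrix_matrix_mult_def sum_subtractf field_simps)

lemma matrix_scaleR_left: "(c *\<^sub>R (A::real^'n^'m)) ** B = c *\<^sub>R (A ** B)"
  by (simp add: scalar_matrix_assoc)

lemma matrix_scaleR_right: "(A::real^'n^'m) ** (c *\<^sub>R B) = c *\<^sub>R (A ** B)"
  by (simp add: matrix_scalar_ac scalar_matrix_assoc)

lemma mv_scaleR_left: "(c *\<^sub>R (A::real^'n^'m)) *v x = c *\<^sub>R (A *v x)"
  by (simp add: scaleR_matrix_vector_assoc)

lemma tprod_add_left: "tprod (a + b) c = tprod a c + tprod b c"
  by (simp add: tprod_def matrix_add_rdistrib matrix_vector_mult_add_rdistrib)
lemma tprod_add_right: "tprod a (b + c) = tprod a b + tprod a c"
  by (simp add: tprod_def matrix_add_ldistrib matrix_vector_right_distrib)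
lemma tprod_diff_left: "tprod (a - b) c = tprod a c - tprod b c"
  by (simp add: tprod_def matrix_diff_rdistrib matrix_vector_mult_diff_rdistrib)
lemma tprod_diff_right: "tprod a (b - c) = tprod a b - tprod a c"
  by (simp add: tprod_def matrix_diff_ldistrib matrix_vector_mult_diff_distrib)
lemma tprod_scaleR_left: "tprod (r *\<^sub>R a) c = r *\<^sub>R tprod a c"
  by (simp add: tprod_def matrix_scaleR_left mv_scaleR_left)
lemma tprod_scaleR_right: "tprod a (r *\<^sub>R c) = r *\<^sub>R tprod a c"
  by (simp add: tprod_def matrix_scaleR_right matrix_vector_mult_scaleR)
lemma tprod_minus_left: "tprod (- a) c = - tprod a c"
  using tprod_scaleR_left[of "-1" a c] by simp
lemma tprod_minus_right: "tprod a (- c) = - tprod a c"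
  using tprod_scaleR_right[of a "-1" c] by simp
lemma tprod_zero_left[simp]: "tprod 0 c = 0"
  by (simp add: tprod_def zero_prod_def)
lemma tprod_zero_right[simp]: "tprod a 0 = 0"
  by (simp add: tprod_def zero_prod_def)
lemma tprod_assoc: "tprod (tprod a b) c = tprod a (tprod b c)"
  by (simp add: tprod_def matrix_mul_assoc matrix_vector_mul_assoc)
lemma tprod_gone[simp]: "tprod gone c = c"
  by (simp add: tprod_def gone_def)
lemma lmul_tprod: "lmul g Z = tprod g Z"
  by (simp add: lmul_def tprod_def)

lemmas tprod_simps = tprod_add_left tprod_add_right tprod_diff_left tprod_diff_right
  tprod_scaleR_left tprod_scaleR_right tprod_minus_left tprod_minus_right

lemma act_gmul: "act (gmul g h) x = act g (act h x)"
  by (simp add: act_def gmul_def matrix_vector_mul_assoc matrix_vector_right_distrib add.assoc)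

lemma act_gone_plus: "act (gone + Z) x = x + thlin x Z"
  by (simp add: act_def gone_def thlin_def matrix_vector_mult_add_rdistrib)

lemma gmul_gone_plus: "gmul (gone + Z) (gone + W) = gone + (Z + W + tprod Z W)"
  by (simp add: gmul_def gone_def tprod_def matrix_add_ldistrib matrix_add_rdistrib
      matrix_vector_mult_add_rdistrib prod_eq_iff algebra_simps)

lemma linear_thlin: "linear (thlin p)"
  by (rule linearI) (simp_all add: thlin_def matrix_vector_mult_add_rdistrib mv_scaleR_left algebra_simps)

lemma bounded_linear_thlin: "bounded_linear (thlin p)"
  using linear_thlin linear_conv_bounded_linear by blast

lemma bilinear_tprod: "bilinear tprod"
  unfolding bilinear_def by (simp add: linear_iff tprod_simps)

lemma bounded_bilinear_tprod: "bounded_bilinear tprod"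
  using bilinear_tprod bilinear_conv_bounded_bilinear by blast



lemma matrix_inv_works:
  assumes "invertible (M::real^'n^'n)"
  shows "M ** matrix_inv M = mat 1 \<and> matrix_inv M ** M = mat 1"
  using assms unfolding invertible_def matrix_inv_def by (rule someI_ex)

lemma inner_mv: "((N::real^'n^'n) *v a) \<bullet> z = a \<bullet> (transpose N *v z)"
  by (metis dot_lmul_matrix transpose_matrix_vector transpose_transpose)

lemma mv_neg: "(A::real^'n^'m) *v (- c) = - (A *v c)"
  using matrix_vector_mult_diff_distrib[of A 0 c] by simp

lemma act_diff: "act h a - act h b = fst h *v (a - b)"
  by (simp add: act_def matrix_vector_mult_diff_distrib)

lemma cent_sq:
  assumes nd: "nondeg_sym_form B" and sub: "subgroup_Iso B G"
    and ct: "centralizer_transitive B G" and gG: "gone + Z \<in> G"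
  shows "tprod Z Z = 0"
proof -
  obtain A v where Z: "Z = (A,v)" by (cases Z)
  let ?g = "gone + Z"
  define bt where "bt a b = a \<bullet> (B *v b)" for a b
  have symB: "transpose B = B" and invB: "invertible B" using nd by (auto simp: nondeg_sym_form_def)
  have sym: "bt a b = bt b a" for a b
    unfolding bt_def by (metis inner_commute inner_mv symB)
  have btl: "bt (a + b) c = bt a c + bt b c" "bt (-a) c = - bt a c" for a b c
    by (simp_all add: bt_def inner_add_left)
  have btr: "bt a (b + c) = bt a b + bt a c" "bt a (-c) = - bt a c" for a b c
    by (simp_all add: bt_def inner_add_right matrix_vector_right_distrib mv_neg)
  have iso: "bt (fst h *v a) (fst h *v b) = bt a b" if "h \<in> Iso B" for h a b
  proof -
    have "transpose (fst h) ** B ** fst h = B" using that by (auto simp: Iso_def)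
    then show ?thesis unfolding bt_def inner_mv
      by (simp add: matrix_vector_mul_assoc matrix_mul_assoc)
  qed
  have gIso: "?g \<in> Iso B" using sub gG by (auto simp: subgroup_Iso_def)
  have fstg: "fst ?g = mat 1 + A" by (simp add: Z gone_def)
  define q where "q x = bt (A *v x + v) (A *v x + v)" for x
  have dact: "act ?g x - x = A *v x + v" for x
    by (simp add: act_gone_plus thlin_def Z)
  have qinv: "q y = q 0" for y
  proof -
    obtain h where h: "h \<in> Iso B" "\<forall>g\<in>G. gmul h g = gmul g h" "act h 0 = y"
      using ct unfolding centralizer_transitive_def by blast
    have "act ?g y = act h (act ?g 0)"
      using h gG by (metis act_gmul)
    then have "act ?g y - y = fst h *v (act ?g 0 - 0)"
      using h(3) act_diff by metis
    then show ?thesis unfolding q_def dact[symmetric] using iso[OF h(1)] by simp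
  qed
  have qexp: "q x = bt (A *v x) (A *v x) + 2 * bt (A *v x) v + bt v v" for x
    unfolding q_def by (simp add: btl btr sym[of v "A *v x"])
  have h1: "bt (A *v x) (A *v x) = 0" for x
  proof -
    have "q x + q (-x) = 2 * q 0" using qinv[of x] qinv[of "-x"] by simp
    then show ?thesis using qexp[of x] qexp[of "-x"] qexp[of 0]
      by (simp add: mv_neg btl btr bt_def)
  qed
  have h2: "bt (A *v x) v = 0" for x
    using qinv[of x] qexp[of x] qexp[of 0] h1[of x] by (simp add: bt_def)
  have h3: "bt (A *v x) (A *v y) = 0" for x y
    using h1[of "x + y"] h1[of x] h1[of y]
    by (simp add: matrix_vector_right_distrib btl btr sym[of "A *v y" "A *v x"])
  have h4: "bt (A *v x) y = - bt x (A *v y)" for x y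
  proof -
    have "bt ((mat 1 + A) *v x) ((mat 1 + A) *v y) = bt x y"
      using iso[OF gIso] fstg by metis
    then show ?thesis
      by (simp add: matrix_vector_mult_add_rdistrib btl btr h3)
  qed
  have nondeg: "z = 0" if "\<And>y. bt z y = 0" for z
  proof -
    have "bt z (matrix_inv B *v z) = z \<bullet> z"
      unfolding bt_def by (simp add: matrix_vector_mul_assoc matrix_inv_works[OF invB])
    then show ?thesis using that by simp
  qed
  have AA: "A *v (A *v x) = 0" for x
    by (rule nondeg) (use h4[of "A *v x"] h3[of x] in simp)
  have Av: "A *v v = 0"
    by (rule nondeg) (use h4[of v] sym[of v] h2 in simp)
  have "A ** A = 0"
    using AA by (simp add: matrix_eq matrix_vector_mul_assoc)
  then show ?thesis using Av by (simp add: tprod_def Z zero_prod_def)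
qed

lemma cent_inj:
  assumes ct: "centralizer_transitive B G" and gG: "gone + Z \<in> G"
    and th: "thlin p Z = 0"
  shows "Z = 0"
proof -
  obtain A v where Z: "Z = (A,v)" by (cases Z)
  let ?k = "gone + Z"
  have fix_all: "act ?k x = x" for x
  proof -
    obtain h where h: "h \<in> Iso B" "\<forall>g\<in>G. gmul h g = gmul g h" "act h p = x"
      using ct unfolding centralizer_transitive_def by blast
    have "act ?k p = p" using th by (simp add: act_gone_plus)
    then show ?thesis using h gG by (metis act_gmul)
  qed
  have e: "A *v x + v = 0" for x
    using fix_all[of x] by (simp add: act_gone_plus thlin_def Z)
  have v0: "v = 0" using e[of 0] by simp
  have "A = 0" using e v0 by (simp add: matrix_eq)
  then show ?thesis using v0 Z by (simp add: zero_prod_def)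
qed



lemma pf_rpf: "poly_fun f \<Longrightarrow> real_polynomial_function f"
  by (induction rule: poly_fun.induct) (auto intro: bounded_linear_inner_left)

lemma rpf_line_zero:
  fixes f :: "'a::real_normed_vector \<Rightarrow> real"
  assumes rf: "real_polynomial_function f" and z: "\<And>k::nat. f (a + real k *\<^sub>R b) = 0"
  shows "f (a + t *\<^sub>R b) = 0"
proof -
  have pl: "polynomial_function (\<lambda>t::real. a + t *\<^sub>R b)"
    by (intro polynomial_function_add polynomial_function_mult polynomial_function_const polynomial_function_id)
  have "real_polynomial_function (f \<circ> (\<lambda>t::real. a + t *\<^sub>R b))"
    by (rule real_polynomial_function_compose[OF pl rf])
  then obtain c n where cn: "f \<circ> (\<lambda>t::real. a + t *\<^sub>R b) = (\<lambda>x. \<Sum>i\<le>n. c i * x^i)"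
    using real_polynomial_function_iff_sum by blast
  have sub: "range real \<subseteq> {x. (\<Sum>i\<le>n. c i * x^i) = 0}"
  proof
    fix x assume "x \<in> range real"
    then obtain k where "x = real k" by auto
    then show "x \<in> {x. (\<Sum>i\<le>n. c i * x^i) = 0}"
      using z[of k] cn by (metis (mono_tags, lifting) comp_apply mem_Collect_eq)
  qed
  have "infinite (range (real :: nat \<Rightarrow> real))"
    using range_inj_infinite inj_of_nat by blast
  then have "infinite {x. (\<Sum>i\<le>n. c i * x^i) = 0}"
    using sub finite_subset by blast
  then have "\<forall>i\<le>n. c i = 0" using polyfun_finite_roots by blast
  then have "(\<Sum>i\<le>n. c i * t^i) = 0" by simp
  then show ?thesis using cn by (metis comp_apply)
qed

definition isop :: "real^('n::finite)^'n \<Rightarrow> 'n \<Rightarrow> 'n \<Rightarrow> 'n amat \<Rightarrow> real" where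
  "isop B i j h = (transpose (fst h) ** B ** fst h) $ i $ j - B $ i $ j"

lemma rpf_ent: "real_polynomial_function (\<lambda>h::'n::finite amat. fst h $ k $ l)"
proof -
  have "bounded_linear (\<lambda>h::'n::finite amat. fst h $ k $ l)"
    by (intro bounded_linear_compose[OF bounded_linear_vec_nth] bounded_linear_fst)
  then show ?thesis by (rule real_polynomial_function.intros(1))
qed

lemma rpf_isop: "real_polynomial_function (isop B i j)"
  unfolding isop_def matrix_matrix_mult_def transpose_def
  by (simp; intro real_polynomial_function_diff real_polynomial_function_sum finite
        real_polynomial_function.intros(4) real_polynomial_function.intros(2) rpf_ent)

lemma Iso_isop: "h \<in> Iso B \<longleftrightarrow> (\<forall>i j. isop B i j h = 0)"
  by (auto simp: Iso_def isop_def vec_eq_iff)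



locale setting =
  fixes B :: "real^'n::finite^'n" and G :: "'n amat set"
  assumes nd: "nondeg_sym_form B" and sg: "subgroup_Iso B G"
    and zc: "zariski_closed_in_Iso B G" and ct: "centralizer_transitive B G"
begin

definition L :: "'n amat set" where "L = {Z. gone + Z \<in> G}"

lemma G_repr: "g \<in> G \<Longrightarrow> g - gone \<in> L \<and> g = gone + (g - gone)"
  by (simp add: L_def)

lemma L_sq: "Z \<in> L \<Longrightarrow> tprod Z Z = 0"
  using cent_sq[OF nd sg ct] by (simp add: L_def)

lemma L_zero: "0 \<in> L"
  using sg by (simp add: L_def subgroup_Iso_def)

lemma L_mul: "Z \<in> L \<Longrightarrow> W \<in> L \<Longrightarrow> Z + W + tprod Z W \<in> L"
  using sg unfolding L_def subgroup_Iso_def by (metis mem_Collect_eq gmul_gone_plus)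

lemma L_nat: "Z \<in> L \<Longrightarrow> real k *\<^sub>R Z \<in> L"
proof (induction k)
  case 0 then show ?case using L_zero by simp
next
  case (Suc k)
  have "real k *\<^sub>R Z + Z + tprod (real k *\<^sub>R Z) Z \<in> L"
    using L_mul Suc by blast
  moreover have "tprod (real k *\<^sub>R Z) Z = 0" using L_sq[OF Suc.prems] by (simp add: tprod_scaleR_left)
  ultimately show ?case by (simp add: algebra_simps)
qed

lemma L_scale: "Z \<in> L \<Longrightarrow> t *\<^sub>R Z \<in> L"
proof -
  assume Z: "Z \<in> L"
  obtain S where S: "\<forall>f\<in>S. poly_fun f" "G = {g \<in> Iso B. \<forall>f\<in>S. f g = 0}"
    using zc unfolding zariski_closed_in_Iso_def by blast
  have inG: "gone + real k *\<^sub>R Z \<in> G" for k using L_nat[OF Z] by (simp add: L_def)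
  have "gone + t *\<^sub>R Z \<in> Iso B"
    unfolding Iso_isop
  proof (intro allI)
    fix i j
    show "isop B i j (gone + t *\<^sub>R Z) = 0"
      by (rule rpf_line_zero[OF rpf_isop]) (use inG S in \<open>auto simp: Iso_isop\<close>)
  qed
  moreover have "f (gone + t *\<^sub>R Z) = 0" if "f \<in> S" for f
    by (rule rpf_line_zero[OF pf_rpf]) (use inG S that in auto)
  ultimately have "gone + t *\<^sub>R Z \<in> G" using S(2) by blast
  then show ?thesis by (simp add: L_def)
qed

lemma L_neg: "Z \<in> L \<Longrightarrow> - Z \<in> L"
  using L_scale[of Z "-1"] by simp

lemma vec_aux: "(a::'a::real_vector) + b = 0 \<Longrightarrow> - a + b = 0 \<Longrightarrow> a = 0"
proof -
  assume h1: "a + b = 0" and h2: "- a + b = 0"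
  then have "b = a" by (simp add: add_eq_0_iff)
  then have "2 *\<^sub>R a = 0" using h1 by (simp add: scaleR_2)
  then show ?thesis by simp
qed

lemma L_anti: assumes Z: "Z \<in> L" and W: "W \<in> L"
  shows "tprod Z W + tprod W Z = 0" and "tprod (tprod Z W) Z = 0"
proof -
  let ?P = "tprod Z W"
  define E where "E t = Z + t *\<^sub>R W + t *\<^sub>R ?P" for t
  have EL: "E t \<in> L" for t
    using L_mul[OF Z L_scale[OF W, of t]] by (simp add: E_def tprod_scaleR_right)
  have ZZ: "tprod Z Z = 0" and WW: "tprod W W = 0" using L_sq Z W by auto
  have ZP: "tprod Z ?P = 0" by (simp add: tprod_assoc[symmetric] ZZ)
  have PW: "tprod ?P W = 0" by (simp add: tprod_assoc WW)
  have ex: "tprod (E t) (E t) = t *\<^sub>R (?P + tprod W Z + tprod ?P Z) + (t*t) *\<^sub>R (tprod W ?P + tprod ?P ?P)" for t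
    unfolding E_def
    apply (simp only: tprod_add_left tprod_add_right tprod_scaleR_left tprod_scaleR_right ZZ WW ZP PW scaleR_zero_right scaleR_scaleR)
    apply (simp add: scaleR_add_right)
    done
  have e1: "tprod (E 1) (E 1) = 0" and e2: "tprod (E (-1)) (E (-1)) = 0" using L_sq EL by auto
  have a0: "?P + tprod W Z + tprod ?P Z = 0"
  proof -
    from e1 e2 ex[of 1] ex[of "-1"] have
      "(?P + tprod W Z + tprod ?P Z) + (tprod W ?P + tprod ?P ?P) = 0"
      "- (?P + tprod W Z + tprod ?P Z) + (tprod W ?P + tprod ?P ?P) = 0" by simp_all
    then show ?thesis by (rule vec_aux)
  qed
  have "tprod (?P + tprod W Z + tprod ?P Z) Z = tprod ?P Z"
    by (simp add: tprod_simps tprod_assoc ZZ)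
  then show PZ: "tprod ?P Z = 0" using a0 by simp
  show "tprod Z W + tprod W Z = 0" using a0 PZ by simp
qed

lemma L_add: assumes Z: "Z \<in> L" and W: "W \<in> L" shows "Z + W \<in> L"
proof -
  let ?h = "(1/2) *\<^sub>R Z"
  have h: "?h \<in> L" using L_scale Z by blast
  define U where "U = ?h + W + tprod ?h W"
  have U: "U \<in> L" using L_mul[OF h W] by (simp add: U_def)
  have V: "U + ?h + tprod U ?h \<in> L" using L_mul[OF U h] .
  have ZZ: "tprod Z Z = 0" using L_sq Z by auto
  have an: "tprod Z W + tprod W Z = 0" "tprod (tprod Z W) Z = 0" using L_anti Z W by auto
  have "U + ?h + tprod U ?h = Z + W + (1/2) *\<^sub>R (tprod Z W + tprod W Z)"
    unfolding U_def
    apply (simp only: tprod_add_left tprod_add_right tprod_scaleR_left tprod_scaleR_right ZZ an(2) scaleR_zero_right scaleR_scaleR add_0_right add_0_left)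
    apply (simp add: scaleR_add_right)
    apply (simp add: scaleR_add_left[symmetric])
    done
  then show ?thesis using V an(1) by simp
qed

lemma L_prod: assumes Z: "Z \<in> L" and W: "W \<in> L" shows "tprod Z W \<in> L"
proof -
  have "(Z + W + tprod Z W) + (- (Z + W)) \<in> L"
    using L_add L_mul L_neg Z W by blast
  then show ?thesis by simp
qed

lemma L_comm: "Z \<in> L \<Longrightarrow> W \<in> L \<Longrightarrow> tprod W Z = - tprod Z W"
  using L_anti(1) by (metis add_eq_0_iff)

lemma L_triple: assumes P: "P \<in> L" and Q: "Q \<in> L" and R: "R \<in> L"
  shows "tprod (tprod P Q) R = 0"
proof -
  have PQ: "tprod P Q \<in> L" using L_prod P Q by blast
  have "tprod (tprod P Q) R = - tprod R (tprod P Q)" using L_comm PQ R by blast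
  also have "\<dots> = - tprod (tprod R P) Q" by (simp add: tprod_assoc)
  also have "\<dots> = tprod (tprod P R) Q" using L_comm[OF R P] by (simp add: tprod_minus_left)
  also have "\<dots> = tprod P (tprod R Q)" by (simp add: tprod_assoc)
  also have "\<dots> = - tprod P (tprod Q R)" using L_comm[OF Q R] by (simp add: tprod_minus_right)
  also have "\<dots> = - tprod (tprod P Q) R" by (simp add: tprod_assoc)
  finally have h: "tprod (tprod P Q) R = - tprod (tprod P Q) R" .
  have "tprod (tprod P Q) R + tprod (tprod P Q) R = 0" by (subst (2) h) simp
  then have "2 *\<^sub>R tprod (tprod P Q) R = 0" by (simp add: scaleR_2)
  then show ?thesis by simp
qed

lemma L_subspace: "subspace L"
  unfolding subspace_def using L_zero L_add L_scale by blast

end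


lemma deriv_in_subspace:
  fixes f :: "real \<Rightarrow> 'a::euclidean_space"
  assumes S: "subspace S" and fS: "\<And>t. f t \<in> S" and d: "(f has_vector_derivative D) (at 0)"
  shows "D \<in> S"
proof -
  obtain y z where y: "y \<in> span S" and z: "\<And>w. w \<in> span S \<Longrightarrow> orthogonal z w" and D: "D = y + z"
    using orthogonal_subspace_decomp_exists[of S D] by metis
  have spS: "span S = S" using S by simp
  have d1: "((\<lambda>t. z \<bullet> f t) has_vector_derivative z \<bullet> D) (at 0)"
    using bounded_linear.has_vector_derivative[OF bounded_linear_inner_right d] .
  have "(\<lambda>t. z \<bullet> f t) = (\<lambda>t. 0)"
    using z fS spS by (auto simp: orthogonal_def)
  then have d2: "((\<lambda>t. z \<bullet> f t) has_vector_derivative 0) (at 0)" by simp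
  have "z \<bullet> D = 0" using vector_derivative_unique_at[OF d1 d2] .
  moreover have "z \<bullet> y = 0" using z y by (simp add: orthogonal_def)
  ultimately have "z \<bullet> z = 0" using D by (simp add: inner_add_right)
  then have "z = 0" by simp
  then show ?thesis using D y spS by simp
qed

lemma subspace_lin_image:
  assumes "linear f" "subspace S" shows "subspace (f ` S)"
  using assms unfolding subspace_def
  by (auto simp: linear_0 linear_add[symmetric] linear_scale[symmetric] intro!: image_eqI)

context setting begin

lemma TG_eq: assumes g: "g \<in> G" shows "TG G g = L"
proof
  show "TG G g \<subseteq> L"
  proof
    fix Z assume "Z \<in> TG G g"
    then obtain \<gamma> where \<gamma>: "\<forall>t. \<gamma> t \<in> G" "\<gamma> 0 = g" "(\<gamma> has_vector_derivative Z) (at 0)"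
      unfolding TG_def by blast
    have "((\<lambda>t. \<gamma> t - gone) has_vector_derivative Z) (at 0)"
      using has_vector_derivative_diff[OF \<gamma>(3) has_vector_derivative_const[of gone]] by simp
    moreover have "\<gamma> t - gone \<in> L" for t using \<gamma>(1) G_repr by blast
    ultimately show "Z \<in> L" using deriv_in_subspace[OF L_subspace, of "\<lambda>t. \<gamma> t - gone" Z] by blast
  qed
next
  show "L \<subseteq> TG G g"
  proof
    fix Z assume Z: "Z \<in> L"
    have N0: "g - gone \<in> L" using G_repr g by blast
    have "g + t *\<^sub>R Z \<in> G" for t
    proof -
      have "(g - gone) + t *\<^sub>R Z \<in> L" using L_add[OF N0 L_scale[OF Z]] .
      then show ?thesis by (simp add: L_def)
    qed
    moreover have "((\<lambda>t. g + t *\<^sub>R Z) has_vector_derivative Z) (at 0)"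
      by (auto intro!: derivative_eq_intros)
    ultimately show "Z \<in> TG G g" unfolding TG_def by (intro CollectI exI[of _ "\<lambda>t. g + t *\<^sub>R Z"]) auto
  qed
qed

lemma orbit_eq: "orbit G p = (\<lambda>Z. p + thlin p Z) ` L"
proof -
  have "orbit G p = (\<lambda>Z. act (gone + Z) p) ` L"
  proof (intro set_eqI iffI)
    fix x assume "x \<in> orbit G p"
    then obtain g where g: "g \<in> G" "x = act g p" unfolding orbit_def by blast
    then have "g - gone \<in> L" "x = act (gone + (g - gone)) p" using G_repr by auto
    then show "x \<in> (\<lambda>Z. act (gone + Z) p) ` L" by blast
  next
    fix x assume "x \<in> (\<lambda>Z. act (gone + Z) p) ` L"
    then show "x \<in> orbit G p" unfolding orbit_def L_def by blast
  qed
  then show ?thesis by (simp add: act_gone_plus)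
qed

lemma thlin_L_inj: "Z \<in> L \<Longrightarrow> thlin p Z = 0 \<Longrightarrow> Z = 0"
  using cent_inj[OF ct] by (simp add: L_def)

lemma thlin_inj_on: "inj_on (thlin p) L"
proof (rule inj_onI)
  fix x y assume x: "x \<in> L" and y: "y \<in> L" and e: "thlin p x = thlin p y"
  have "thlin p (x - y) = 0" using e by (simp add: linear_diff[OF linear_thlin])
  then have "x - y = 0" using thlin_L_inj subspace_diff[OF L_subspace x y] by blast
  then show "x = y" by simp
qed

lemma orbit_affine: "affine (orbit G p)"
proof -
  have "subspace (thlin p ` L)" by (rule subspace_lin_image[OF linear_thlin L_subspace])
  then have "affine ((+) p ` (thlin p ` L))"
    using affine_translation subspace_imp_affine by blast
  moreover have "(+) p ` (thlin p ` L) = orbit G p" by (simp add: orbit_eq image_image)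
  ultimately show ?thesis by simp
qed

lemma orbit_bij: "bij_betw (\<lambda>g. act g p) G (orbit G p)"
proof -
  have "inj_on (\<lambda>g. act g p) G"
  proof (rule inj_onI)
    fix g h assume g: "g \<in> G" and h: "h \<in> G" and e: "act g p = act h p"
    have g': "g - gone \<in> L" "g = gone + (g - gone)" using G_repr g by blast+
    have h': "h - gone \<in> L" "h = gone + (h - gone)" using G_repr h by blast+
    have "thlin p (g - gone) = thlin p (h - gone)"
      using e g'(2) h'(2) act_gone_plus by (metis add_left_cancel)
    then have "g - gone = h - gone" using thlin_inj_on g'(1) h'(1) by (meson inj_onD)
    then show "g = h" by simp
  qed
  then show ?thesis unfolding bij_betw_def orbit_def by simp
qed

lemma thlin_image: "thlin p ` L = {x - y | x y. x \<in> orbit G p \<and> y \<in> orbit G p}"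
proof (intro set_eqI iffI)
  fix w assume "w \<in> thlin p ` L"
  then obtain Z where Z: "Z \<in> L" "w = thlin p Z" by blast
  have "p + thlin p Z \<in> orbit G p" "p + thlin p 0 \<in> orbit G p"
    using Z L_zero by (auto simp: orbit_eq)
  moreover have "w = (p + thlin p Z) - (p + thlin p 0)" using Z linear_0[OF linear_thlin] by simp
  ultimately show "w \<in> {x - y | x y. x \<in> orbit G p \<and> y \<in> orbit G p}" by blast
next
  fix w assume "w \<in> {x - y | x y. x \<in> orbit G p \<and> y \<in> orbit G p}"
  then obtain Z W where ZW: "Z \<in> L" "W \<in> L" "w = (p + thlin p Z) - (p + thlin p W)"
    by (auto simp: orbit_eq)
  then have "w = thlin p (Z - W)" by (simp add: linear_diff[OF linear_thlin])
  then show "w \<in> thlin p ` L" using subspace_diff[OF L_subspace ZW(1,2)] by blast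
qed

end


lemma differentiable_vec_comp:
  fixes f :: "'a::real_normed_vector \<Rightarrow> 'b::euclidean_space^'n::finite"
  assumes "\<And>i. (\<lambda>x. f x $ i) differentiable (at a)"
  shows "f differentiable (at a)"
proof -
  have "(\<lambda>x. f x \<bullet> b) differentiable (at a)" if b: "b \<in> Basis" for b
  proof -
    obtain i u where iu: "u \<in> Basis" "b = axis i u" using b by (auto simp: Basis_vec_def)
    have "(\<lambda>x. (f x $ i) \<bullet> u) differentiable (at a)"
      using assms[of i] iu(1) differentiable_componentwise_within[of "\<lambda>x. f x $ i" a UNIV] by blast
    moreover have "(\<lambda>x. f x \<bullet> b) = (\<lambda>x. (f x $ i) \<bullet> u)" using iu(2) by (simp add: inner_axis)
    ultimately show ?thesis by simp
  qed
  then show ?thesis using differentiable_componentwise_within[of f a UNIV] by blast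
qed

lemma rpf_det:
  fixes F :: "'a::real_normed_vector \<Rightarrow> real^'n::finite^'n"
  assumes "\<And>i j. real_polynomial_function (\<lambda>x. F x $ i $ j)"
  shows "real_polynomial_function (\<lambda>x. det (F x))"
  unfolding det_def
  by (intro real_polynomial_function_sum finite_permutations finite real_polynomial_function.intros(4)
        real_polynomial_function.intros(2) real_polynomial_function_prod assms)

definition cmat :: "real^'n::finite^'n \<Rightarrow> 'n \<Rightarrow> 'n \<Rightarrow> real^'n^'n" where
  "cmat A j k = (\<chi> i l. if l = j then axis k 1 $ i else A $ i $ l)"

lemma rpf_entry: "real_polynomial_function (\<lambda>A::real^'n::finite^'m::finite. A $ i $ j)"
  by (intro real_polynomial_function.intros(1) bounded_linear_compose[OF bounded_linear_vec_nth] bounded_linear_vec_nth)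

lemma rpf_det_id: "real_polynomial_function (\<lambda>A::real^'n::finite^'n. det A)"
  using rpf_det[of "\<lambda>A. A"] rpf_entry by blast

lemma rpf_det_cmat: "real_polynomial_function (\<lambda>A::real^'n::finite^'n. det (cmat A j k))"
proof (rule rpf_det)
  fix i l
  show "real_polynomial_function (\<lambda>x::real^'n^'n. cmat x j k $ i $ l)"
    by (cases "l = j") (simp_all add: cmat_def rpf_entry real_polynomial_function.intros(2))
qed

lemma minv_entry:
  fixes A :: "real^'n::finite^'n"
  assumes d: "det A \<noteq> 0"
  shows "matrix_inv A $ j $ k = det (cmat A j k) / det A"
proof -
  have inv: "invertible A" using d invertible_det_nz by blast
  have w: "A ** matrix_inv A = mat 1" using matrix_inv_works[OF inv] by blast
  let ?x = "matrix_inv A *v axis k 1"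
  have "A *v ?x = axis k 1" by (simp add: matrix_vector_mul_assoc w)
  then have "?x = (\<chi> k'. det (\<chi> i l. if l = k' then axis k 1 $ i else A $ i $ l) / det A)"
    using cramer[OF d] by blast
  then have "?x $ j = det (cmat A j k) / det A" by (simp add: cmat_def)
  moreover have "?x $ j = matrix_inv A $ j $ k"
    by (simp add: matrix_vector_mult_basis column_def)
  ultimately show ?thesis by simp
qed

lemma minv_differentiable:
  fixes M0 :: "real^'n::finite^'n"
  assumes d: "det M0 \<noteq> 0"
  shows "matrix_inv differentiable (at M0)"
proof -
  define cr where "cr A = (\<chi> j k. det (cmat A j k) / det A)" for A :: "real^'n^'n"
  have "cr differentiable (at M0)"
  proof (rule differentiable_vec_comp)
    fix j
    show "(\<lambda>x. cr x $ j) differentiable at M0"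
    proof (rule differentiable_vec_comp)
      fix k
      show "(\<lambda>x. cr x $ j $ k) differentiable at M0"
        unfolding cr_def using d
        by (simp add: differentiable_divide differentiable_at_real_polynomial_function rpf_det_cmat rpf_det_id)
    qed
  qed
  then obtain D where D: "(cr has_derivative D) (at M0)" unfolding differentiable_def by blast
  have cont: "continuous_on UNIV (\<lambda>A::real^'n^'n. det A)"
    using continuous_real_polymonial_function[OF rpf_det_id] continuous_at_imp_continuous_on by blast
  have op: "open {A::real^'n^'n. det A \<noteq> 0}"
    using open_Collect_neq[OF cont continuous_on_const] .
  have "(matrix_inv has_derivative D) (at M0)"
    by (rule has_derivative_transform_within_open[OF D op])
       (use d in \<open>auto simp: cr_def minv_entry vec_eq_iff\<close>)
  then show ?thesis unfolding differentiable_def by blast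
qed



definition mtp :: "real^'n::finite^'n \<Rightarrow> 'n amat \<Rightarrow> 'n amat" where
  "mtp M Z = (M ** fst Z, M *v snd Z)"

lemma mtp_tprod: "mtp (fst a) Z = tprod a Z"
  by (simp add: mtp_def tprod_def)

lemma bounded_bilinear_mtp: "bounded_bilinear mtp"
proof -
  have "bilinear mtp"
    unfolding bilinear_def
    by (simp add: linear_iff mtp_def matrix_add_ldistrib matrix_add_rdistrib matrix_vector_right_distrib
        matrix_vector_mult_add_rdistrib matrix_scaleR_left matrix_scaleR_right mv_scaleR_left
        matrix_vector_mult_scaleR)
  then show ?thesis using bilinear_conv_bounded_bilinear by blast
qed

lemma lmul_ginv: "lmul (ginv h) Z = mtp (matrix_inv (fst h)) Z"
  by (simp add: lmul_def ginv_def mtp_def)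

lemma minv_nil:
  fixes K :: "real^'n::finite^'n"
  assumes "K ** K = 0"
  shows "matrix_inv (mat 1 + K) = mat 1 - K"
proof -
  have e1: "(mat 1 + K) ** (mat 1 - K) = mat 1"
    by (simp add: matrix_add_rdistrib matrix_diff_ldistrib assms)
  have e2: "(mat 1 - K) ** (mat 1 + K) = mat 1"
    by (simp add: matrix_diff_rdistrib matrix_add_ldistrib assms)
  have inv: "invertible (mat 1 + K)" unfolding invertible_def using e1 e2 by blast
  have w: "matrix_inv (mat 1 + K) ** (mat 1 + K) = mat 1" using matrix_inv_works[OF inv] by blast
  have "matrix_inv (mat 1 + K) = matrix_inv (mat 1 + K) ** ((mat 1 + K) ** (mat 1 - K))"
    by (simp add: e1)
  also have "\<dots> = mat 1 - K" by (simp add: matrix_mul_assoc w)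
  finally show ?thesis .
qed

lemma det_nil:
  fixes K :: "real^'n::finite^'n"
  assumes "K ** K = 0"
  shows "det (mat 1 + K) \<noteq> 0"
proof -
  have e1: "(mat 1 + K) ** (mat 1 - K) = mat 1"
    by (simp add: matrix_add_rdistrib matrix_diff_ldistrib assms)
  have e2: "(mat 1 - K) ** (mat 1 + K) = mat 1"
    by (simp add: matrix_diff_rdistrib matrix_add_ldistrib assms)
  have "invertible (mat 1 + K)" unfolding invertible_def using e1 e2 by blast
  then show ?thesis using invertible_det_nz by blast
qed

context setting begin

lemma alg_final:
  assumes N0: "N0 \<in> L" and X: "X \<in> L" and Y: "Y \<in> L" and D: "D \<in> L"
  shows "tprod (gone + N0) (tprod (gone - N0) D + tprod (- X) Y
           + (1/2) *\<^sub>R bracket (tprod (gone - N0) X) (tprod (gone - N0) Y)) = D"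
proof -
  have NX: "tprod N0 X \<in> L" and NY: "tprod N0 Y \<in> L" using L_prod N0 X Y by auto
  have t1: "tprod X (tprod N0 Y) = 0" using L_triple[OF X N0 Y] by (simp add: tprod_assoc)
  have t2: "tprod (tprod N0 X) Y = 0" using L_triple[OF N0 X Y] .
  have t3: "tprod (tprod N0 X) (tprod N0 Y) = 0" using L_triple[OF N0 X NY] .
  have t4: "tprod Y (tprod N0 X) = 0" using L_triple[OF Y N0 X] by (simp add: tprod_assoc)
  have t5: "tprod (tprod N0 Y) X = 0" using L_triple[OF N0 Y X] .
  have t6: "tprod (tprod N0 Y) (tprod N0 X) = 0" using L_triple[OF N0 Y NX] .
  have t7: "tprod N0 (tprod N0 D) = 0" using L_sq[OF N0] by (simp add: tprod_assoc[symmetric])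
  have t8: "tprod N0 (tprod X Y) = 0" using L_triple[OF N0 X Y] by (simp add: tprod_assoc)
  have cm: "tprod Y X = - tprod X Y" using L_comm[OF X Y] .
  show ?thesis
    unfolding bracket_def
    apply (simp only: tprod_add_left tprod_add_right tprod_diff_left tprod_diff_right tprod_minus_left
        tprod_minus_right tprod_scaleR_left tprod_scaleR_right tprod_gone t1 t2 t3 t4 t5 t6 t7 cm t8)
    apply (simp add: algebra_simps)
    apply (simp add: scaleR_add_left[symmetric] add.assoc[symmetric])
    done
qed

end


context setting begin

lemma nabla_eq:
  assumes X: "vector_field G X" and Y: "vector_field G Y" and g: "g \<in> G"
  shows "nabla_pull G p X Y g = nabla0 X Y g"
proof -
  define N0 where "N0 = g - gone"
  have N0L: "N0 \<in> L" and gN: "g = gone + N0" using G_repr[OF g] by (auto simp: N0_def)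
  define Xg where "Xg = X g"
  have XL: "Xg \<in> L" using X g TG_eq unfolding vector_field_def Xg_def by blast
  have YL: "Y h \<in> L" if "h \<in> G" for h using Y that TG_eq unfolding vector_field_def by blast
  obtain Y' where Y': "(Y has_derivative Y') (at g)"
    using Y g unfolding vector_field_def differentiable_def by blast
  define D where "D = Y' Xg"
  define c where "c t = g + t *\<^sub>R Xg" for t
  have cG: "c t \<in> G" for t
  proof -
    have "N0 + t *\<^sub>R Xg \<in> L" using L_add[OF N0L L_scale[OF XL]] .
    then show ?thesis by (simp add: L_def c_def gN add.assoc)
  qed
  have cv: "(c has_vector_derivative Xg) (at 0)"
    unfolding c_def by (auto intro!: derivative_eq_intros)
  then have cd: "(c has_derivative (\<lambda>t. t *\<^sub>R Xg)) (at 0)"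
    by (simp add: has_vector_derivative_def)
  have c0: "c 0 = g" by (simp add: c_def)
  have chain_vec: "((\<lambda>t. H (c t)) has_vector_derivative H' Xg) (at 0)"
    if "(H has_derivative H') (at g)" for H :: "'n amat \<Rightarrow> 'n amat" and H'
  proof -
    have "((H \<circ> c) has_derivative (H' \<circ> (\<lambda>t. t *\<^sub>R Xg))) (at 0)"
      using diff_chain_at[OF cd] that c0 by simp
    moreover have "H' \<circ> (\<lambda>t. t *\<^sub>R Xg) = (\<lambda>t. t *\<^sub>R H' Xg)"
      using has_derivative_bounded_linear[OF that] by (auto simp: o_def linear_simps)
    ultimately show ?thesis by (simp add: has_vector_derivative_def o_def)
  qed
  have YcD: "((\<lambda>t. Y (c t)) has_vector_derivative D) (at 0)"
    unfolding D_def by (rule chain_vec[OF Y'])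
  have DL: "D \<in> L"
    using deriv_in_subspace[OF L_subspace, of "\<lambda>t. Y (c t)" D] YcD YL cG by blast

  have injG: "inj_on (\<lambda>g. act g p) G" using orbit_bij bij_betw_imp_inj_on by blast
  have actc: "act (c t) p = act g p + t *\<^sub>R thlin p Xg" for t
    by (simp add: c_def act_def thlin_def matrix_vector_mult_add_rdistrib mv_scaleR_left algebra_simps)
  have thinv_c: "thinv G p (act g p + t *\<^sub>R thlin p Xg) = c t" for t
    unfolding thinv_def
  proof (rule the_equality)
    show "c t \<in> G \<and> act (c t) p = act g p + t *\<^sub>R thlin p Xg" using cG actc by blast
  next
    fix h assume "h \<in> G \<and> act h p = act g p + t *\<^sub>R thlin p Xg"
    then show "h = c t" using injG cG actc by (metis inj_onD)
  qed
  have vd: "vector_derivative (\<lambda>t. thlin p (Y (thinv G p (act g p + t *\<^sub>R thlin p (X g))))) (at 0)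
      = thlin p D"
  proof -
    have "(\<lambda>t. thlin p (Y (thinv G p (act g p + t *\<^sub>R thlin p (X g))))) = (\<lambda>t. thlin p (Y (c t)))"
      using thinv_c by (simp add: Xg_def)
    moreover have "((\<lambda>t. thlin p (Y (c t))) has_vector_derivative thlin p D) (at 0)"
      using bounded_linear.has_vector_derivative[OF bounded_linear_thlin YcD] .
    ultimately show ?thesis using vector_derivative_at by metis
  qed
  have pull: "nabla_pull G p X Y g = D"
    unfolding nabla_pull_def vd
  proof (rule the_equality)
    show "D \<in> TG G g \<and> thlin p D = thlin p D" using DL TG_eq[OF g] by simp
  next
    fix Z assume "Z \<in> TG G g \<and> thlin p Z = thlin p D"
    then show "Z = D" using thlin_inj_on DL TG_eq[OF g] by (metis inj_onD)
  qed

  obtain A0 v0 where N0e: "N0 = (A0, v0)" by (cases N0)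
  have A0sq: "A0 ** A0 = 0" using L_sq[OF N0L] by (simp add: N0e tprod_def zero_prod_def)
  have fstg: "fst g = mat 1 + A0" by (simp add: gN N0e gone_def)
  have invg: "matrix_inv (fst g) = fst (gone - N0)" using minv_nil[OF A0sq] by (simp add: fstg N0e gone_def)
  have "matrix_inv differentiable (at (fst g))"
    using minv_differentiable det_nil[OF A0sq] fstg by metis
  then obtain Mi' where Mi': "(matrix_inv has_derivative Mi') (at (fst g))"
    unfolding differentiable_def by blast
  have mif: "((\<lambda>h::'n amat. matrix_inv (fst h)) has_derivative (Mi' \<circ> fst)) (at g)"
    using diff_chain_at[OF bounded_linear_imp_has_derivative[OF bounded_linear_fst] Mi']
    by (simp add: o_def)
  define F where "F h = lmul (ginv h) (Y h)" for h
  have Fm: "F = (\<lambda>h. mtp (matrix_inv (fst h)) (Y h))" by (simp add: F_def lmul_ginv fun_eq_iff)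
  define F' where "F' = (\<lambda>k. mtp (matrix_inv (fst g)) (Y' k) + mtp ((Mi' \<circ> fst) k) (Y g))"
  have Fd: "(F has_derivative F') (at g)"
    unfolding Fm F'_def using bounded_bilinear.FDERIV[OF bounded_bilinear_mtp mif Y'] .
  have fdF: "frechet_derivative F (at g) = F'" using frechet_derivative_at[OF Fd] by simp
  have v1: "((\<lambda>t. F (c t)) has_vector_derivative F' Xg) (at 0)" by (rule chain_vec[OF Fd])
  have Fc: "F (c t) = mtp (mat 1 - A0 - t *\<^sub>R fst Xg) (Y (c t))" for t
  proof -
    have "N0 + t *\<^sub>R Xg \<in> L" using L_add[OF N0L L_scale[OF XL]] .
    then have sq: "(A0 + t *\<^sub>R fst Xg) ** (A0 + t *\<^sub>R fst Xg) = 0"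
      using L_sq by (fastforce simp: N0e tprod_def zero_prod_def)
    have "fst (c t) = mat 1 + (A0 + t *\<^sub>R fst Xg)" by (simp add: c_def fstg add.assoc)
    then have "matrix_inv (fst (c t)) = mat 1 - A0 - t *\<^sub>R fst Xg" using minv_nil[OF sq] by simp
    then show ?thesis by (simp add: Fm)
  qed
  have v2: "((\<lambda>t. F (c t)) has_vector_derivative
        (mtp (mat 1 - A0) D + mtp (- fst Xg) (Y g))) (at 0)"
  proof -
    have a: "((\<lambda>t. mat 1 - A0 - t *\<^sub>R fst Xg) has_vector_derivative (- fst Xg)) (at 0)"
      by (auto intro!: derivative_eq_intros)
    show ?thesis
      using bounded_bilinear.has_vector_derivative[OF bounded_bilinear_mtp a YcD] Fc c0 by simp
  qed
  have F'X: "F' Xg = tprod (gone - N0) D + tprod (- Xg) (Y g)"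
  proof -
    have "F' Xg = mtp (mat 1 - A0) D + mtp (- fst Xg) (Y g)"
      using vector_derivative_unique_at[OF v1 v2] .
    moreover have "mtp (mat 1 - A0) D = tprod (gone - N0) D"
    proof -
      have "mat 1 - A0 = fst (gone - N0)" by (simp add: N0e gone_def)
      then show ?thesis using mtp_tprod by metis
    qed
    moreover have "mtp (- fst Xg) (Y g) = tprod (- Xg) (Y g)"
    proof -
      have "- fst Xg = fst (- Xg)" by simp
      then show ?thesis using mtp_tprod by metis
    qed
    ultimately show ?thesis by simp
  qed
  have lg: "lmul (ginv g) Z = tprod (gone - N0) Z" for Z
    unfolding lmul_ginv invg by (rule mtp_tprod)
  have "nabla0 X Y g = lmul g (frechet_derivative F (at g) Xg
        + (1/2) *\<^sub>R bracket (lmul (ginv g) Xg) (lmul (ginv g) (Y g)))"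
    unfolding nabla0_def F_def Xg_def by (rule refl)
  also have "\<dots> = tprod g (tprod (gone - N0) D + tprod (- Xg) (Y g)
           + (1/2) *\<^sub>R bracket (tprod (gone - N0) Xg) (tprod (gone - N0) (Y g)))"
    unfolding fdF F'X lg by (simp only: lmul_tprod)
  also have "\<dots> = D" using alg_final[OF N0L XL YL[OF g] DL] unfolding gN[symmetric] .
  finally show ?thesis using pull by simp
qed

end

theorem proposition4p4:
  fixes B :: "real^'n^'n" and G :: "'n amat set" and p :: "real^'n"
  assumes "nondeg_sym_form B"
    and "subgroup_Iso B G"
    and "zariski_closed_in_Iso B G"
    and "centralizer_transitive B G"
  shows "affine (orbit G p)
    \<and> bij_betw (\<lambda>g. act g p) G (orbit G p)
    \<and> (\<forall>g\<in>G. inj_on (thlin p) (TG G g) \<and>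
          thlin p ` TG G g = {x - y | x y. x \<in> orbit G p \<and> y \<in> orbit G p})
    \<and> (\<forall>X Y. vector_field G X \<longrightarrow> vector_field G Y \<longrightarrow>
          (\<forall>g\<in>G. nabla_pull G p X Y g = nabla0 X Y g))"
proof -
  interpret setting B G using assms by unfold_locales
  have "\<forall>g\<in>G. inj_on (thlin p) (TG G g) \<and>
          thlin p ` TG G g = {x - y | x y. x \<in> orbit G p \<and> y \<in> orbit G p}"
    using TG_eq thlin_inj_on thlin_image by simp
  then show ?thesis using orbit_affine orbit_bij nabla_eq by blast
qed

end
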